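(* Let $p$ be a prime and let $R$ be a local nearring which is not a nearfield, whose additive group is $\langle a\rangle+\langle b\rangle\cong C_{p^2}\times C_p$ with $ap^2=0$, $bp=0$, $a+b=b+a$, where $a$ is the identity element of $R$. Then the subgroup $\langle ap\rangle$ is an ideal of $R$.
   Context: A (left) nearring is a set $R$ with operations $+,\cdot$ such that $(R,+)$ is a group, $(R,\cdot)$ a semigroup, and $x(y+z)=xy+xz$ for all $x,y,z$. A nearring with identity is local if its non-invertible elements form a subgroup of $(R,+)$; a nearfield is a nearring with identity in which every nonzero element is invertible. An ideal of $R$ is a normal subgroup $I$ of $(R,+)$ such that $xI\subseteq I$ for all $x\in R$ and $(z+x)y-xy\in I$ for all $x,y\in R$, $z\in I$. Additive notation: $ap$ is $a$ added $p$ times. *)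

theory Defs
  imports "HOL-Algebra.Coset" "HOL-Computational_Algebra.Primes"
begin

definition addgrp :: "'a set \<Rightarrow> ('a \<Rightarrow> 'a \<Rightarrow> 'a) \<Rightarrow> 'a \<Rightarrow> 'a monoid" where
  "addgrp R add z = \<lparr>carrier = R, monoid.mult = add, monoid.one = z\<rparr>"

definition nearring :: "'a set \<Rightarrow> ('a \<Rightarrow> 'a \<Rightarrow> 'a) \<Rightarrow> ('a \<Rightarrow> 'a \<Rightarrow> 'a) \<Rightarrow> 'a \<Rightarrow> bool" where
  "nearring R add mul z \<longleftrightarrow>
     group (addgrp R add z) \<and>
     (\<forall>x\<in>R. \<forall>y\<in>R. mul x y \<in> R) \<and>
     (\<forall>x\<in>R. \<forall>y\<in>R. \<forall>w\<in>R. mul (mul x y) w = mul x (mul y w)) \<and>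
     (\<forall>x\<in>R. \<forall>y\<in>R. \<forall>w\<in>R. mul x (add y w) = add (mul x y) (mul x w))"

definition is_identity :: "'a set \<Rightarrow> ('a \<Rightarrow> 'a \<Rightarrow> 'a) \<Rightarrow> 'a \<Rightarrow> bool" where
  "is_identity R mul e \<longleftrightarrow> e \<in> R \<and> (\<forall>x\<in>R. mul e x = x \<and> mul x e = x)"

definition nr_invertible :: "'a set \<Rightarrow> ('a \<Rightarrow> 'a \<Rightarrow> 'a) \<Rightarrow> 'a \<Rightarrow> 'a \<Rightarrow> bool" where
  "nr_invertible R mul e x \<longleftrightarrow> x \<in> R \<and> (\<exists>y\<in>R. mul x y = e \<and> mul y x = e)"

definition local_nearring :: "'a set \<Rightarrow> ('a \<Rightarrow> 'a \<Rightarrow> 'a) \<Rightarrow> ('a \<Rightarrow> 'a \<Rightarrow> 'a) \<Rightarrow> 'a \<Rightarrow> 'a \<Rightarrow> bool" where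
  "local_nearring R add mul z e \<longleftrightarrow>
     nearring R add mul z \<and> is_identity R mul e \<and>
     subgroup {x \<in> R. \<not> nr_invertible R mul e x} (addgrp R add z)"

definition nearfield :: "'a set \<Rightarrow> ('a \<Rightarrow> 'a \<Rightarrow> 'a) \<Rightarrow> ('a \<Rightarrow> 'a \<Rightarrow> 'a) \<Rightarrow> 'a \<Rightarrow> 'a \<Rightarrow> bool" where
  "nearfield R add mul z e \<longleftrightarrow>
     nearring R add mul z \<and> is_identity R mul e \<and>
     (\<forall>x\<in>R. x \<noteq> z \<longrightarrow> nr_invertible R mul e x)"

definition nr_ideal :: "'a set \<Rightarrow> ('a \<Rightarrow> 'a \<Rightarrow> 'a) \<Rightarrow> ('a \<Rightarrow> 'a \<Rightarrow> 'a) \<Rightarrow> 'a \<Rightarrow> 'a set \<Rightarrow> bool" where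
  "nr_ideal R add mul z I \<longleftrightarrow>
     normal I (addgrp R add z) \<and>
     (\<forall>x\<in>R. \<forall>i\<in>I. mul x i \<in> I) \<and>
     (\<forall>x\<in>R. \<forall>y\<in>R. \<forall>w\<in>I.
        add (mul (add w x) y) (inv\<^bsub>addgrp R add z\<^esub> (mul x y)) \<in> I)"

end

theory Submission
  imports Defs "HOL-Number_Theory.Number_Theory"
begin

locale NR = comm_group G for G (structure) +
  fixes mul :: "'a \<Rightarrow> 'a \<Rightarrow> 'a" and a b :: 'a and p :: nat
  assumes prime_p: "prime p"
  and mul_closed: "\<lbrakk>x \<in> carrier G; y \<in> carrier G\<rbrakk> \<Longrightarrow> mul x y \<in> carrier G"
  and mul_assoc: "\<lbrakk>x \<in> carrier G; y \<in> carrier G; w \<in> carrier G\<rbrakk> \<Longrightarrow> mul (mul x y) w = mul x (mul y w)"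
  and distr: "\<lbrakk>x \<in> carrier G; y \<in> carrier G; w \<in> carrier G\<rbrakk> \<Longrightarrow> mul x (y \<otimes> w) = mul x y \<otimes> mul x w"
  and a_in: "a \<in> carrier G" and b_in: "b \<in> carrier G"
  and a_right: "x \<in> carrier G \<Longrightarrow> mul x a = x"
  and a_left: "x \<in> carrier G \<Longrightarrow> mul a x = x"
  and a_ord: "a [^] (p^2) = \<one>" and b_ord: "b [^] p = \<one>"
  and bij: "bij_betw (\<lambda>(i, j). a [^] (i::nat) \<otimes> b [^] (j::nat)) ({..<p^2} \<times> {..<p}) (carrier G)"
begin

lemma p_gt1: "p > 1" using prime_p prime_gt_1_nat by blast

lemma mul_one: assumes "x \<in> carrier G" shows "mul x \<one> = \<one>"
proof -
  have "mul x \<one> = mul x (\<one> \<otimes> \<one>)" by simp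
  also have "\<dots> = mul x \<one> \<otimes> mul x \<one>" using distr[of x "\<one>" "\<one>"] assms by simp
  finally show ?thesis using mul_closed assms by simp
qed

lemma mul_pow: assumes "x \<in> carrier G" "y \<in> carrier G"
  shows "mul x (y [^] (n::nat)) = (mul x y) [^] n"
proof (induction n)
  case 0 then show ?case using mul_one assms by simp
next
  case (Suc n)
  then show ?case using assms distr[of x "y [^] n" y] by simp
qed

lemma pow_mod: assumes "x \<in> carrier G" "x [^] n = \<one>"
  shows "x [^] (m::nat) = x [^] (m mod n)"
proof -
  have "m = n * (m div n) + m mod n" by simp
  then have "x [^] m = (x [^] n) [^] (m div n) \<otimes> x [^] (m mod n)"
    by (metis assms(1) nat_pow_mult nat_pow_pow)
  then show ?thesis using assms by simp
qed

lemma a_mod: "a [^] (m::nat) = a [^] (m mod p^2)" using pow_mod a_in a_ord by blast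
lemma b_mod: "b [^] (m::nat) = b [^] (m mod p)" using pow_mod b_in b_ord by blast

lemma coords: assumes "x \<in> carrier G"
  obtains i j where "i < p^2" "j < p" "x = a [^] (i::nat) \<otimes> b [^] (j::nat)"
proof -
  have "x \<in> (\<lambda>(i, j). a [^] (i::nat) \<otimes> b [^] (j::nat)) ` ({..<p^2} \<times> {..<p})"
    using bij assms unfolding bij_betw_def by simp
  then show ?thesis using that by auto
qed

lemma coords_inj: assumes "a [^] (i::nat) \<otimes> b [^] (j::nat) = a [^] (i'::nat) \<otimes> b [^] (j'::nat)"
  shows "i mod p^2 = i' mod p^2 \<and> j mod p = j' mod p"
proof -
  have inj: "inj_on (\<lambda>(i, j). a [^] (i::nat) \<otimes> b [^] (j::nat)) ({..<p^2} \<times> {..<p})"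
    using bij bij_betw_imp_inj_on by blast
  have "a [^] (i mod p^2) \<otimes> b [^] (j mod p) = a [^] (i' mod p^2) \<otimes> b [^] (j' mod p)"
    using assms a_mod b_mod by metis
  moreover have "(i mod p^2, j mod p) \<in> {..<p^2} \<times> {..<p}" "(i' mod p^2, j' mod p) \<in> {..<p^2} \<times> {..<p}"
    using p_gt1 by auto
  ultimately have "(i mod p^2, j mod p) = (i' mod p^2, j' mod p)"
    using inj_onD[OF inj] by (metis (no_types, lifting) case_prod_conv)
  then show ?thesis by simp
qed

lemma a_pp: "a [^] (p * (p * c)) = \<one>"
proof -
  have "a [^] (p * (p * c)) = (a [^] (p^2)) [^] c"
    using a_in nat_pow_pow by (simp add: power2_eq_square mult.assoc)
  then show ?thesis using a_ord by simp
qed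

lemma pow_p: assumes "x \<in> carrier G" shows "\<exists>k. x [^] p = a [^] (p * k)"
proof -
  obtain i j where x: "x = a [^] (i::nat) \<otimes> b [^] (j::nat)" using coords assms by blast
  have "x [^] p = (a [^] i) [^] p \<otimes> (b [^] j) [^] p"
    using x a_in b_in nat_pow_distrib by simp
  also have "(b [^] j) [^] p = \<one>"
    using b_in b_ord nat_pow_pow by (metis mult.commute nat_pow_one)
  also have "(a [^] i) [^] p = a [^] (p * i)" using a_in nat_pow_pow by (simp add: mult.commute)
  finally show ?thesis using a_in by auto
qed

lemma mul_I: assumes "x \<in> carrier G" shows "\<exists>k. mul x (a [^] (p * c)) = a [^] (p * k)"
proof -
  obtain k where k: "x [^] p = a [^] (p * k)" using pow_p assms by blast
  have "mul x (a [^] (p * c)) = (x [^] p) [^] c"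
    using mul_pow assms a_in a_right nat_pow_pow by simp
  also have "\<dots> = a [^] (p * (k * c))" using k a_in nat_pow_pow by (simp add: mult.assoc)
  finally show ?thesis by blast
qed

lemma V_form: assumes "x \<in> carrier G" "x [^] p = \<one>"
  shows "\<exists>c j. j < p \<and> x = a [^] (p * c) \<otimes> b [^] j"
proof -
  obtain i j where ij: "j < p" "x = a [^] (i::nat) \<otimes> b [^] (j::nat)" using coords assms by metis
  have "x [^] p = (a [^] i) [^] p \<otimes> (b [^] j) [^] p"
    using ij a_in b_in nat_pow_distrib by simp
  also have "(b [^] j) [^] p = \<one>"
    using b_in b_ord nat_pow_pow by (metis mult.commute nat_pow_one)
  also have "(a [^] i) [^] p = a [^] (i * p)" using a_in nat_pow_pow by simp
  finally have e0: "a [^] (i * p) \<otimes> b [^] (0::nat) = a [^] (0::nat) \<otimes> b [^] (0::nat)"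
    using assms a_in by simp
  have "(i * p) mod p^2 = 0" using coords_inj[OF e0] by simp
  then have "p * p dvd i * p" by (simp add: power2_eq_square mod_eq_0_iff_dvd)
  then have "p dvd i" using p_gt1 by simp
  then obtain c where "i = p * c" by blast
  then show ?thesis using ij by blast
qed

lemma phi_V: assumes "x \<in> carrier G" shows "(mul x b) [^] p = \<one>"
  using mul_pow[OF assms b_in, of p] b_ord mul_one assms by simp

lemma phi_form: assumes "x \<in> carrier G"
  shows "\<exists>c j. j < p \<and> mul x b = a [^] (p * c) \<otimes> b [^] j"
  using V_form phi_V assms mul_closed b_in by blast


lemma apow_assoc: "w \<in> carrier G \<Longrightarrow> a [^] (m::nat) \<otimes> (a [^] (n::nat) \<otimes> w) = a [^] (m + n) \<otimes> w"
  using a_in by (simp add: m_assoc[symmetric] nat_pow_mult)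

definition cg :: "'a \<Rightarrow> 'a \<Rightarrow> bool" where
  "cg x y \<longleftrightarrow> (\<exists>k. x = a [^] (p * k) \<otimes> y)"

lemma cg_refl: "y \<in> carrier G \<Longrightarrow> cg y y"
  unfolding cg_def by (rule exI[of _ 0]) simp

lemma cg_trans: assumes "cg x y" "cg y w" "w \<in> carrier G" shows "cg x w"
proof -
  obtain k1 k2 where "x = a [^] (p * k1) \<otimes> y" "y = a [^] (p * k2) \<otimes> w"
    using assms unfolding cg_def by blast
  then have "x = a [^] (p * (k1 + k2)) \<otimes> w"
    using a_in assms(3) apow_assoc by (simp add: distrib_left)
  then show ?thesis unfolding cg_def by blast
qed

lemma cg_sym: assumes "cg x y" "y \<in> carrier G" shows "cg y x"
proof -
  obtain k where k: "x = a [^] (p * k) \<otimes> y" using assms unfolding cg_def by blast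
  have "a [^] (p * (k * (p - 1))) \<otimes> x = a [^] (p * (k * (p - 1)) + p * k) \<otimes> y"
    using k a_in assms(2) apow_assoc by simp
  also have "p * (k * (p - 1)) + p * k = p * (p * k)"
    using p_gt1 by (simp add: algebra_simps)
  finally show ?thesis using a_pp assms(2) unfolding cg_def by auto
qed

lemma cg_pow: assumes "cg x y" "y \<in> carrier G" shows "cg (x [^] (n::nat)) (y [^] n)"
proof -
  obtain k where k: "x = a [^] (p * k) \<otimes> y" using assms unfolding cg_def by blast
  then have "x [^] n = a [^] (p * (k * n)) \<otimes> y [^] n"
    using a_in assms(2) nat_pow_distrib nat_pow_pow by (simp add: mult.assoc)
  then show ?thesis unfolding cg_def by blast
qed

lemma cg_I: assumes "y \<in> carrier G" shows "cg (a [^] (p * c) \<otimes> y) (a [^] (p * d) \<otimes> y)"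
proof -
  have "cg (a [^] (p * c) \<otimes> y) y" unfolding cg_def by blast
  moreover have "cg y (a [^] (p * d) \<otimes> y)" using cg_sym[of "a [^] (p * d) \<otimes> y" y] assms
    unfolding cg_def by blast
  ultimately show ?thesis using cg_trans assms a_in by blast
qed

lemma K: assumes "r \<in> carrier G" "s \<in> carrier G" "mul s b = a [^] (p * c) \<otimes> b [^] (j::nat)"
  shows "cg (mul (mul r s) b) ((mul r b) [^] j)"
proof -
  obtain k where k: "mul r (a [^] (p * c)) = a [^] (p * k)" using mul_I assms by blast
  have "mul (mul r s) b = mul r (a [^] (p * c) \<otimes> b [^] j)"
    using mul_assoc assms b_in by simp
  also have "\<dots> = a [^] (p * k) \<otimes> (mul r b) [^] j"
    using distr assms a_in b_in k mul_pow by simp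
  finally show ?thesis unfolding cg_def by blast
qed

lemma mul_apow: "mul (a [^] (m::nat)) (a [^] (n::nat)) = a [^] (m * n)"
  using mul_pow a_in a_right nat_pow_pow by simp

lemma caseA: assumes x: "x \<in> carrier G" "x [^] p = \<one>" and nI: "\<not> (\<exists>k. mul x b = a [^] (p * k))"
  and s: "s \<in> carrier G"
  shows "cg (mul (a [^] (p * k) \<otimes> s) b) (mul s b)"
proof -
  let ?w = "a [^] (p * k)"
  have w: "?w \<in> carrier G" using a_in by simp
  obtain c j where cj: "j < p" "mul s b = a [^] (p * c) \<otimes> b [^] j" using phi_form s by blast
  obtain c' j' where cj': "j' < p" "mul (?w \<otimes> s) b = a [^] (p * c') \<otimes> b [^] j'"
    using phi_form s w by blast
  have xw: "mul x ?w = \<one>"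
    using mul_pow[OF x(1) a_in] a_right x nat_pow_pow by (simp add: nat_pow_pow[symmetric])
  have eq: "mul x (?w \<otimes> s) = mul x s" using distr x w s xw mul_closed by simp
  have c1: "cg (mul (mul x s) b) ((mul x b) [^] j)" using K x s cj by blast
  have c2: "cg (mul (mul x s) b) ((mul x b) [^] j')" using K[OF x(1) _ cj'(2)] x s w eq by simp
  have xb: "mul x b \<in> carrier G" using mul_closed x b_in by simp
  have c3: "cg ((mul x b) [^] j) ((mul x b) [^] j')"
    using cg_trans[OF cg_sym[OF c1] c2] xb mul_closed x s b_in by simp
  obtain e m where em: "m < p" "mul x b = a [^] (p * e) \<otimes> b [^] m" using phi_form x by blast
  have m0: "m \<noteq> 0" using em nI a_in by (metis nat_pow_0 r_one nat_pow_closed)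
  have pw: "\<And>t. (mul x b) [^] (t::nat) = a [^] (p * (e * t)) \<otimes> b [^] (m * t)"
    using em a_in b_in nat_pow_distrib nat_pow_pow by (simp add: mult.assoc)
  obtain k2 where "(mul x b) [^] j = a [^] (p * k2) \<otimes> (mul x b) [^] j'" using c3 unfolding cg_def by blast
  then have "a [^] (p * (e * j)) \<otimes> b [^] (m * j) = a [^] (p * k2 + p * (e * j')) \<otimes> b [^] (m * j')"
    using pw a_in b_in apow_assoc by simp
  then have "(m * j) mod p = (m * j') mod p" using coords_inj by blast
  then have "[m * j = m * j'] (mod p)" by (simp add: cong_def)
  moreover have "coprime m p" using m0 em(1) prime_p
    by (metis coprime_commute dvd_imp_le not_less prime_imp_coprime_nat neq0_conv)
  ultimately have "[j = j'] (mod p)" using cong_mult_lcancel_nat by blast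
  then have jj: "j = j'" using cj cj' by (simp add: cong_def)
  show ?thesis using cj cj' jj cg_I b_in by simp
qed


lemma Npow: "[(1 + p * c) ^ k = 1 + k * p * c] (mod p^2)"
proof (induction k)
  case 0 then show ?case by simp
next
  case (Suc k)
  have "[(1 + p * c) ^ k * (1 + p * c) = (1 + k * p * c) * (1 + p * c)] (mod p^2)"
    by (rule cong_mult[OF Suc.IH cong_refl])
  then have "[(1 + p * c) ^ Suc k = (1 + k * p * c) * (1 + p * c)] (mod p^2)"
    by (simp only: power_Suc2)
  moreover have "(1 + k * p * c) * (1 + p * c) = (1 + Suc k * p * c) + (k * c * c) * p^2"
    by (simp add: algebra_simps power2_eq_square)
  moreover have "[(1 + Suc k * p * c) + (k * c * c) * p^2 = 1 + Suc k * p * c] (mod p^2)"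
    unfolding cong_def by simp
  ultimately show ?case using cong_trans by metis
qed

lemma gN: assumes "N mod p = 1" shows "\<exists>e. mul (a [^] N) b = a [^] (p * e) \<otimes> b"
proof -
  obtain e t where et: "t < p" "mul (a [^] N) b = a [^] (p * e) \<otimes> b [^] t"
    using phi_form a_in by blast
  have claim: "cg (mul (a [^] (N ^ k)) b) (b [^] (t ^ k))" for k
  proof (induction k)
    case 0 then show ?case using a_left b_in cg_refl a_in by simp
  next
    case (Suc k)
    have "mul (a [^] (N ^ Suc k)) b = mul (mul (a [^] (N ^ k)) (a [^] N)) b"
      using mul_apow by (simp add: mult.commute)
    then have c1: "cg (mul (a [^] (N ^ Suc k)) b) ((mul (a [^] (N ^ k)) b) [^] t)"
      using K[OF _ _ et(2)] a_in by simp
    have c2: "cg ((mul (a [^] (N ^ k)) b) [^] t) ((b [^] (t ^ k)) [^] t)"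
      using cg_pow Suc b_in by simp
    have "(b [^] (t ^ k)) [^] t = b [^] (t ^ Suc k)" using b_in nat_pow_pow by (simp add: mult.commute)
    then show ?case using cg_trans[OF c1 c2] b_in by simp
  qed
  have "N = 1 + p * (N div p)" using assms by (metis mod_div_mult_eq add.commute mult.commute)
  then have "[N ^ p = 1 + p * p * (N div p)] (mod p^2)" using Npow[of "N div p" p] by (metis mult.assoc)
  moreover have "[1 + p * p * (N div p) = 1] (mod p * p)" unfolding cong_def by (simp only: mod_mult_self2)
  then have "[1 + p * p * (N div p) = 1] (mod p^2)" by (simp only: power2_eq_square)
  ultimately have "(N ^ p) mod p^2 = 1 mod p^2" unfolding cong_def by simp
  moreover have "1 mod p^2 = (1::nat)" using p_gt1
    by (metis One_nat_def less_1_mult mod_less power2_eq_square)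
  ultimately have "a [^] (N ^ p) = a [^] (1::nat)" using a_mod[of "N^p"] by simp
  then have "a [^] (N ^ p) = a" using a_in by simp
  then have "cg b (b [^] (t ^ p))" using claim[of p] a_left b_in by simp
  then obtain k where "b = a [^] (p * k) \<otimes> b [^] (t ^ p)" unfolding cg_def by blast
  then have "a [^] (0::nat) \<otimes> b [^] (1::nat) = a [^] (p * k) \<otimes> b [^] (t ^ p)" using a_in b_in by simp
  then have tp: "1 mod p = t ^ p mod p" using coords_inj by blast
  have t0: "t \<noteq> 0"
  proof
    assume "t = 0" then have "t ^ p mod p = 0" using p_gt1 by (simp add: zero_power)
    then show False using tp p_gt1 by simp
  qed
  have "\<not> p dvd t" using t0 et(1) by (meson dvd_imp_le not_less neq0_conv)
  then have "[t ^ (p - 1) = 1] (mod p)" using fermat_theorem prime_p by blast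
  then have "[t * t ^ (p - 1) = t * 1] (mod p)" using cong_mult cong_refl by blast
  moreover have "t * t ^ (p - 1) = t ^ p" using p_gt1 by (simp add: power_eq_if)
  ultimately have "t mod p = t ^ p mod p" by (simp add: cong_def)
  then have "t = 1" using tp et(1) p_gt1 by simp
  then show ?thesis using et b_in by auto
qed

lemma caseB: assumes allV: "\<forall>x\<in>carrier G. x [^] p = \<one> \<longrightarrow> (\<exists>k. mul x b = a [^] (p * k))"
  and s: "s \<in> carrier G"
  shows "cg (mul (a [^] (p * k) \<otimes> s) b) (mul s b)"
proof (cases "s [^] p = \<one>")
  case True
  have "(a [^] (p * k) \<otimes> s) [^] p = a [^] (p * (p * k)) \<otimes> s [^] p"
    using a_in s nat_pow_distrib nat_pow_pow by (simp add: mult.commute)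
  then have "(a [^] (p * k) \<otimes> s) [^] p = \<one>" using True a_pp by simp
  then obtain k1 where k1: "mul (a [^] (p * k) \<otimes> s) b = a [^] (p * k1)" using allV a_in s by blast
  obtain k2 where k2: "mul s b = a [^] (p * k2)" using allV True s by blast
  show ?thesis using cg_I[of "\<one>" k1 k2] k1 k2 a_in by simp
next
  case False
  obtain i j where ij: "s = a [^] (i::nat) \<otimes> b [^] (j::nat)" using coords s by metis
  have sp: "s [^] (p * n) = a [^] (i * p * n)" for n
  proof -
    have "s [^] p = (a [^] i) [^] p \<otimes> (b [^] j) [^] p"
      using ij a_in b_in nat_pow_distrib by simp
    also have "(b [^] j) [^] p = \<one>"
      using b_in b_ord nat_pow_pow by (metis mult.commute nat_pow_one)
    also have "(a [^] i) [^] p = a [^] (i * p)" using a_in nat_pow_pow by simp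
    finally have "s [^] p = a [^] (i * p)" using a_in by simp
    then show ?thesis using s a_in nat_pow_pow by (metis)
  qed
  have "\<not> p dvd i"
  proof
    assume "p dvd i" then obtain c where "i = p * c" by blast
    then have "s [^] p = \<one>" using sp[of 1] a_pp by (simp add: mult.commute)
    then show False using False by simp
  qed
  then have "coprime i p" using prime_p by (metis coprime_commute prime_imp_coprime_nat)
  then obtain x where x: "[i * x = 1] (mod p)" using cong_solve_coprime_nat by auto
  define c where "c = x * k"
  have "[i * c = k] (mod p)" unfolding c_def using cong_mult[OF x cong_refl[of k]] by (simp add: mult.assoc)
  then have "(i * c) mod p * p = k mod p * p" by (simp add: cong_def)
  then have "(i * c * p) mod (p * p) = (k * p) mod (p * p)" by (simp add: mod_mult_mult2)
  then have "(i * p * c) mod p^2 = (p * k) mod p^2"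
    by (simp add: power2_eq_square mult.commute mult.left_commute)
  then have "a [^] (i * p * c) = a [^] (p * k)" using a_mod[of "i * p * c"] a_mod[of "p * k"] by metis
  then have spc: "s [^] (p * c) = a [^] (p * k)" using sp by simp
  define u where "u = a [^] (1 + p * c)"
  have u: "u \<in> carrier G" unfolding u_def using a_in by simp
  have "mul s u = mul s (a \<otimes> a [^] (p * c))" unfolding u_def using a_in nat_pow_mult[of a 1 "p*c"] by simp
  also have "\<dots> = s \<otimes> a [^] (p * k)" using distr s a_in a_right mul_pow spc by simp
  also have "\<dots> = a [^] (p * k) \<otimes> s" using s a_in m_comm by simp
  finally have su: "mul s u = a [^] (p * k) \<otimes> s" .
  have "(1 + p * c) mod p = 1 mod p" by (simp only: mod_mult_self2)
  then have "(1 + p * c) mod p = 1" using p_gt1 by simp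
  then obtain e where "mul (a [^] (1 + p * c)) b = a [^] (p * e) \<otimes> b" using gN by blast
  then have e: "mul u b = a [^] (p * e) \<otimes> b" unfolding u_def .
  have "cg (mul (mul s u) b) ((mul s b) [^] (1::nat))" using K[OF s u, of e 1] e b_in by simp
  then show ?thesis using su s mul_closed b_in by simp
qed

lemma phi_cong: assumes "s \<in> carrier G" shows "cg (mul (a [^] (p * k) \<otimes> s) b) (mul s b)"
proof (cases "\<forall>x\<in>carrier G. x [^] p = \<one> \<longrightarrow> (\<exists>k. mul x b = a [^] (p * k))")
  case True then show ?thesis using caseB assms by blast
next
  case False then show ?thesis using caseA assms by blast
qed

lemma third: assumes x: "x \<in> carrier G" and y: "y \<in> carrier G"
  shows "\<exists>K. mul (a [^] (p * k) \<otimes> x) y = a [^] (p * K) \<otimes> mul x y"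
proof -
  let ?w = "a [^] (p * k)"
  have w: "?w \<in> carrier G" using a_in by simp
  obtain i j where ij: "y = a [^] (i::nat) \<otimes> b [^] (j::nat)" using coords y by metis
  have my: "mul v y = v [^] i \<otimes> (mul v b) [^] j" if "v \<in> carrier G" for v
    using ij distr that a_in b_in mul_pow a_right by simp
  obtain k1 where k1: "mul (?w \<otimes> x) b = a [^] (p * k1) \<otimes> mul x b"
    using phi_cong x unfolding cg_def by blast
  have xb: "mul x b \<in> carrier G" using mul_closed x b_in by simp
  have "mul (?w \<otimes> x) y = (?w \<otimes> x) [^] i \<otimes> (a [^] (p * k1) \<otimes> mul x b) [^] j"
    using my[of "?w \<otimes> x"] k1 w x by simp
  also have "\<dots> = (a [^] (p * (k * i)) \<otimes> x [^] i) \<otimes> (a [^] (p * (k1 * j)) \<otimes> (mul x b) [^] j)"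
    using w x xb a_in nat_pow_distrib nat_pow_pow by (simp add: mult.assoc)
  also have "\<dots> = (a [^] (p * (k * i)) \<otimes> a [^] (p * (k1 * j))) \<otimes> (x [^] i \<otimes> (mul x b) [^] j)"
    using x xb a_in by (simp add: m_ac)
  also have "\<dots> = a [^] (p * (k * i + k1 * j)) \<otimes> mul x y"
    using my x a_in by (simp add: nat_pow_mult distrib_left)
  finally show ?thesis by blast
qed


lemma I_sub: "subgroup {a [^] (p * k) | k::nat. True} G"
proof (rule subgroupI)
  show "{a [^] (p * k) | k::nat. True} \<subseteq> carrier G" using a_in by auto
  show "{a [^] (p * k) | k::nat. True} \<noteq> {}" by blast
next
  fix x assume "x \<in> {a [^] (p * k) | k::nat. True}"
  then obtain k where k: "x = a [^] (p * k)" by blast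
  have "a [^] (p * (k * (p - 1))) \<otimes> a [^] (p * k) = a [^] (p * (k * (p - 1)) + p * k)"
    using a_in by (simp add: nat_pow_mult)
  also have "p * (k * (p - 1)) + p * k = p * (p * k)"
    using p_gt1 by (simp add: algebra_simps)
  finally have "a [^] (p * (k * (p - 1))) \<otimes> x = \<one>" using a_pp k by simp
  then have "inv x = a [^] (p * (k * (p - 1)))" using inv_equality a_in k by simp
  then show "inv x \<in> {a [^] (p * k) | k::nat. True}" by blast
next
  fix x y assume "x \<in> {a [^] (p * k) | k::nat. True}" "y \<in> {a [^] (p * k) | k::nat. True}"
  then obtain k l where "x = a [^] (p * k)" "y = a [^] (p * l)" by blast
  then have "x \<otimes> y = a [^] (p * (k + l))" using a_in by (simp add: nat_pow_mult distrib_left)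
  then show "x \<otimes> y \<in> {a [^] (p * k) | k::nat. True}" by blast
qed

end

context group begin
lemma comm_helper: assumes "a \<in> carrier G" "b \<in> carrier G" "a \<otimes> b = b \<otimes> a"
  shows "(a [^] (i::nat) \<otimes> b [^] (j::nat)) \<otimes> (a [^] (k::nat) \<otimes> b [^] (l::nat)) = a [^] (i + k) \<otimes> b [^] (j + l)"
proof -
  have c0: "a [^] k \<otimes> b = b \<otimes> a [^] k" using group_commutes_pow[of a b k] assms by simp
  have c: "b [^] j \<otimes> a [^] k = a [^] k \<otimes> b [^] j"
    using group_commutes_pow[of b "a [^] k" j] c0 assms by simp
  have "(a [^] i \<otimes> b [^] j) \<otimes> (a [^] k \<otimes> b [^] l) = a [^] i \<otimes> ((b [^] j \<otimes> a [^] k) \<otimes> b [^] l)"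
    using assms by (simp add: m_assoc)
  also have "\<dots> = a [^] i \<otimes> ((a [^] k \<otimes> b [^] j) \<otimes> b [^] l)" using c by simp
  also have "\<dots> = (a [^] i \<otimes> a [^] k) \<otimes> (b [^] j \<otimes> b [^] l)" using assms by (simp add: m_assoc)
  also have "\<dots> = a [^] (i + k) \<otimes> b [^] (j + l)" using assms by (simp add: nat_pow_mult)
  finally show ?thesis .
qed
end

theorem lemma10:
  fixes p :: nat and R :: "'a set" and add mul :: "'a \<Rightarrow> 'a \<Rightarrow> 'a" and z a b :: 'a
  assumes "prime p"
    and "local_nearring R add mul z a"
    and "\<not> nearfield R add mul z a"
    and "a \<in> R" and "b \<in> R"
    and "add a b = add b a"
    and "a [^]\<^bsub>addgrp R add z\<^esub> (p ^ 2) = z"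
    and "b [^]\<^bsub>addgrp R add z\<^esub> p = z"
    and "bij_betw (\<lambda>(i, j). add (a [^]\<^bsub>addgrp R add z\<^esub> (i::nat)) (b [^]\<^bsub>addgrp R add z\<^esub> (j::nat)))
           ({..<p ^ 2} \<times> {..<p}) R"
  shows "nr_ideal R add mul z {(a [^]\<^bsub>addgrp R add z\<^esub> p) [^]\<^bsub>addgrp R add z\<^esub> (k::nat) | k. True}"
proof -
  let ?G = "addgrp R add z"
  have car: "carrier ?G = R" and mlt: "\<And>x y. x \<otimes>\<^bsub>?G\<^esub> y = add x y" and one: "\<one>\<^bsub>?G\<^esub> = z"
    by (simp_all add: addgrp_def)
  have nr: "nearring R add mul z" and idt: "is_identity R mul a"
    using assms(2) unfolding local_nearring_def by auto
  have grp: "group ?G" using nr unfolding nearring_def by auto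
  interpret g: group ?G by (rule grp)
  have ain: "a \<in> carrier ?G" "b \<in> carrier ?G" using assms car by auto
  have ab: "a \<otimes>\<^bsub>?G\<^esub> b = b \<otimes>\<^bsub>?G\<^esub> a" using assms(6) mlt by simp
  have comm: "comm_group ?G"
  proof (rule g.group_comm_groupI)
    fix x y assume x: "x \<in> carrier ?G" and y: "y \<in> carrier ?G"
    have "x \<in> (\<lambda>(i, j). add (a [^]\<^bsub>?G\<^esub> (i::nat)) (b [^]\<^bsub>?G\<^esub> (j::nat))) ` ({..<p ^ 2} \<times> {..<p})"
      using assms(9) x car unfolding bij_betw_def by simp
    then obtain i j where "x = add (a [^]\<^bsub>?G\<^esub> (i::nat)) (b [^]\<^bsub>?G\<^esub> (j::nat))" by auto
    then have xij: "x = a [^]\<^bsub>?G\<^esub> (i::nat) \<otimes>\<^bsub>?G\<^esub> b [^]\<^bsub>?G\<^esub> (j::nat)" using mlt by simp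
    have "y \<in> (\<lambda>(i, j). add (a [^]\<^bsub>?G\<^esub> (i::nat)) (b [^]\<^bsub>?G\<^esub> (j::nat))) ` ({..<p ^ 2} \<times> {..<p})"
      using assms(9) y car unfolding bij_betw_def by simp
    then obtain k l where "y = add (a [^]\<^bsub>?G\<^esub> (k::nat)) (b [^]\<^bsub>?G\<^esub> (l::nat))" by auto
    then have ykl: "y = a [^]\<^bsub>?G\<^esub> (k::nat) \<otimes>\<^bsub>?G\<^esub> b [^]\<^bsub>?G\<^esub> (l::nat)" using mlt by simp
    show "x \<otimes>\<^bsub>?G\<^esub> y = y \<otimes>\<^bsub>?G\<^esub> x"
      using g.comm_helper[OF ain ab] xij ykl by (simp add: add.commute)
  qed
  interpret N: NR ?G mul a b p
  proof (rule NR.intro[OF comm], rule NR_axioms.intro)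
    show "prime p" by (rule assms(1))
    show "\<And>x y. x \<in> carrier ?G \<Longrightarrow> y \<in> carrier ?G \<Longrightarrow> mul x y \<in> carrier ?G"
      using nr car unfolding nearring_def by blast
    show "\<And>x y w. x \<in> carrier ?G \<Longrightarrow> y \<in> carrier ?G \<Longrightarrow> w \<in> carrier ?G \<Longrightarrow> mul (mul x y) w = mul x (mul y w)"
      using nr car unfolding nearring_def by blast
    show "\<And>x y w. x \<in> carrier ?G \<Longrightarrow> y \<in> carrier ?G \<Longrightarrow> w \<in> carrier ?G \<Longrightarrow> mul x (y \<otimes>\<^bsub>?G\<^esub> w) = mul x y \<otimes>\<^bsub>?G\<^esub> mul x w"
      using nr car unfolding nearring_def mlt by blast
    show "a \<in> carrier ?G" "b \<in> carrier ?G" by (rule ain(1), rule ain(2))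
    show "\<And>x. x \<in> carrier ?G \<Longrightarrow> mul x a = x" "\<And>x. x \<in> carrier ?G \<Longrightarrow> mul a x = x"
      using idt car unfolding is_identity_def by auto
    show "a [^]\<^bsub>?G\<^esub> (p ^ 2) = \<one>\<^bsub>?G\<^esub>" "b [^]\<^bsub>?G\<^esub> p = \<one>\<^bsub>?G\<^esub>"
      using assms(7,8) one by auto
    show "bij_betw (\<lambda>(i, j). a [^]\<^bsub>?G\<^esub> (i::nat) \<otimes>\<^bsub>?G\<^esub> b [^]\<^bsub>?G\<^esub> (j::nat)) ({..<p^2} \<times> {..<p}) (carrier ?G)"
      using assms(9) car unfolding mlt by simp
  qed
  let ?I = "{a [^]\<^bsub>?G\<^esub> (p * k) | k::nat. True}"
  have Ieq: "{(a [^]\<^bsub>?G\<^esub> p) [^]\<^bsub>?G\<^esub> (k::nat) | k. True} = ?I"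
    using g.nat_pow_pow ain by auto
  show ?thesis unfolding nr_ideal_def Ieq
  proof (intro conjI ballI)
    show "normal ?I ?G" using comm_group.subgroup_imp_normal[OF comm N.I_sub] .
  next
    fix x i assume x: "x \<in> R" and i: "i \<in> ?I"
    then obtain k where "i = a [^]\<^bsub>?G\<^esub> (p * k)" by blast
    then show "mul x i \<in> ?I" using N.mul_I x car by auto
  next
    fix x y w assume x: "x \<in> R" and y: "y \<in> R" and w: "w \<in> ?I"
    then obtain k where k: "w = a [^]\<^bsub>?G\<^esub> (p * k)" by blast
    obtain K where K: "mul (w \<otimes>\<^bsub>?G\<^esub> x) y = a [^]\<^bsub>?G\<^esub> (p * K) \<otimes>\<^bsub>?G\<^esub> mul x y"
      using N.third x y car k by blast
    have "mul x y \<in> carrier ?G" using N.mul_closed x y car by simp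
    then have "mul (w \<otimes>\<^bsub>?G\<^esub> x) y \<otimes>\<^bsub>?G\<^esub> inv\<^bsub>?G\<^esub> (mul x y) = a [^]\<^bsub>?G\<^esub> (p * K)"
      using K ain by (simp add: g.m_assoc)
    then show "add (mul (add w x) y) (inv\<^bsub>?G\<^esub> (mul x y)) \<in> ?I" using mlt by auto
  qed
qed

end
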